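(* Let $M'$ be a $4m$-dimensional quaternionic space form of constant quaternionic sectional curvature $4c$, endowed with a Ricci quarter-symmetric metric connection $\nabla''$ (in the setting described in the context), and let $N'$ be an $n$-dimensional submanifold of $M'$ with the induced connection. Then at every point $p\in N'$ the scalar curvature $\tau$ of $N'$ satisfies $$\tau(p)\le \frac{n-1}{2}\left(n\|H\|^2+c\Big\{(n-1)+3\sum_{k=1}^{3}\frac{\|P_k\|^2}{n}\Big\}\frac{n-2\,\operatorname{tr}M\,(n-1)}{n-1}\right).$$
   Context: Let $(M',g)$ be a $4m$-dimensional quaternionic Kaehler manifold with local almost Hermitian structures $\psi_1,\psi_2,\psi_3$ ($\psi_i^2=-I$, $\psi_1\psi_2=\psi_3=-\psi_2\psi_1$ and cyclically) which is a quaternionic space form of constant quaternionic sectional curvature $4c$, i.e. its Levi-Civita connection $\nabla^*$ has curvature $R^*(X,Y)Z=c\{g(Y,Z)X-g(X,Z)Y+\sum_{i=1}^3(g(\psi_iY,Z)\psi_iX-g(\psi_iX,Z)\psi_iY-2g(\psi_iX,Y)\psi_iZ)\}$. $M'$ carries the Ricci quarter-symmetric metric connection $\nabla''_XY=\nabla^*_XY+\eta(Y)LX-S(X,Y)P$, where $S$ is the Ricci tensor of $\nabla^*$, $L$ is the $(1,1)$-tensor with $g(LX,Y)=S(X,Y)$, $\eta$ is a 1-form and $P$ the unit vector field with $g(P,X)=\eta(X)$. Put $QX=\nabla^*_XP-\eta(LX)P+\tfrac12\eta(P)LX$ and $M(X,Y)=g(QX,Y)$. $N'$ is an $n$-dimensional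 submanifold with induced connection $\nabla$ (curvature $R$) and second fundamental form $h$; $\{e_1,\dots,e_n\}$ and $\{e_{n+1},\dots,e_{4m}\}$ are orthonormal bases of $T_pN'$ and $T_p^\perp N'$. Write $\psi_kX=P_kX+F_kX$ (tangential and normal parts), $\|P_k\|^2=\sum_{i,j=1}^n g(P_ke_i,e_j)^2$, and $\operatorname{tr}M=\sum_{i=1}^n M(e_i,e_i)$ (denoted $m$ in the paper). Following the paper's standing assumption $S=(\tau'/n)g$, the curvature of $\nabla''$ is $R''(X,Y)Z=R^*(X,Y)Z-\frac{\tau'}{n}\{M(Y,Z)X-M(X,Z)Y+g(Y,Z)QX-g(X,Z)QY\}$ with $\tau'=c\{n(n-1)+3\sum_{k=1}^3\|P_k\|^2\}$, and the Gauss equation $g(R''(X,Y)Z,W)=g(R(X,Y)Z,W)+g(h(X,Z),h(Y,W))-g(h(X,W),h(Y,Z))$ holds for tangent $X,Y,Z,W$. The sectional curvature is $K(e_i\wedge e_j)=g(R(e_i,e_j)e_j,e_i)$, the scalar curvature $\tau(p)=\sum_{1\le i<j\le n}K(e_i\wedge e_j)$, and the mean curvature vector $H=\frac1n\sum_{i=1}^n h(e_i,e_i)$. *)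

theory Defs
  imports "HOL-Analysis.Analysis"
begin

text \<open>Pointwise model at a point p: the ambient tangent space T_p M' is a real
inner product space 'v of dimension 4m; e 0 .. e (n-1) is an orthonormal basis of
T_p N' (and e n .. e (4m-1) of the normal space); psi 1, psi 2, psi 3 are the
local almost Hermitian structures at p.\<close>

definition tan_space :: "(nat \<Rightarrow> 'v::euclidean_space) \<Rightarrow> nat \<Rightarrow> 'v set" where
  "tan_space e n = span (e ` {..<n})"

definition tan_part :: "(nat \<Rightarrow> 'v::euclidean_space) \<Rightarrow> nat \<Rightarrow> 'v \<Rightarrow> 'v" where
  "tan_part e n X = (\<Sum>i<n. inner X (e i) *\<^sub>R e i)"

definition P_op :: "(nat \<Rightarrow> 'v::euclidean_space \<Rightarrow> 'v) \<Rightarrow> (nat \<Rightarrow> 'v) \<Rightarrow> nat \<Rightarrow> nat \<Rightarrow> 'v \<Rightarrow> 'v" where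
  "P_op psi e n k X = tan_part e n (psi k X)"

definition P_normsq :: "(nat \<Rightarrow> 'v::euclidean_space \<Rightarrow> 'v) \<Rightarrow> (nat \<Rightarrow> 'v) \<Rightarrow> nat \<Rightarrow> nat \<Rightarrow> real" where
  "P_normsq psi e n k = (\<Sum>i<n. \<Sum>j<n. (inner (P_op psi e n k (e i)) (e j))\<^sup>2)"

definition tau' :: "real \<Rightarrow> (nat \<Rightarrow> 'v::euclidean_space \<Rightarrow> 'v) \<Rightarrow> (nat \<Rightarrow> 'v) \<Rightarrow> nat \<Rightarrow> real" where
  "tau' c psi e n = c * (real n * (real n - 1) + 3 * (\<Sum>k\<in>{1..3}. P_normsq psi e n k))"

text \<open>Curvature of the quaternionic space form of constant q-sectional curvature 4c\<close>
definition R_star :: "real \<Rightarrow> (nat \<Rightarrow> 'v::euclidean_space \<Rightarrow> 'v) \<Rightarrow> 'v \<Rightarrow> 'v \<Rightarrow> 'v \<Rightarrow> 'v" where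
  "R_star c psi X Y Z = c *\<^sub>R (inner Y Z *\<^sub>R X - inner X Z *\<^sub>R Y
     + (\<Sum>k\<in>{1..3}. inner (psi k Y) Z *\<^sub>R psi k X - inner (psi k X) Z *\<^sub>R psi k Y
                     - (2 * inner (psi k X) Y) *\<^sub>R psi k Z))"

text \<open>Curvature of the Ricci quarter-symmetric metric connection nabla''
  (with S = (tau'/n) g), where M(X,Y) = g(QX,Y)\<close>
definition R_dd :: "real \<Rightarrow> (nat \<Rightarrow> 'v::euclidean_space \<Rightarrow> 'v) \<Rightarrow> (nat \<Rightarrow> 'v) \<Rightarrow> nat
     \<Rightarrow> ('v \<Rightarrow> 'v) \<Rightarrow> 'v \<Rightarrow> 'v \<Rightarrow> 'v \<Rightarrow> 'v" where
  "R_dd c psi e n Q X Y Z = R_star c psi X Y Z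
     - (tau' c psi e n / real n) *\<^sub>R (inner (Q Y) Z *\<^sub>R X - inner (Q X) Z *\<^sub>R Y
                                     + inner Y Z *\<^sub>R Q X - inner X Z *\<^sub>R Q Y)"

definition trM :: "('v::euclidean_space \<Rightarrow> 'v) \<Rightarrow> (nat \<Rightarrow> 'v) \<Rightarrow> nat \<Rightarrow> real" where
  "trM Q e n = (\<Sum>i<n. inner (Q (e i)) (e i))"

definition sec_curv :: "('v::euclidean_space \<Rightarrow> 'v \<Rightarrow> 'v \<Rightarrow> 'v) \<Rightarrow> 'v \<Rightarrow> 'v \<Rightarrow> real" where
  "sec_curv R X Y = inner (R X Y Y) X"

definition scal_curv :: "('v::euclidean_space \<Rightarrow> 'v \<Rightarrow> 'v \<Rightarrow> 'v) \<Rightarrow> (nat \<Rightarrow> 'v) \<Rightarrow> nat \<Rightarrow> real" where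
  "scal_curv R e n = (\<Sum>(i,j)\<in>{(i,j). i < j \<and> j < n}. sec_curv R (e i) (e j))"

definition mean_curv :: "('v::euclidean_space \<Rightarrow> 'v \<Rightarrow> 'v) \<Rightarrow> (nat \<Rightarrow> 'v) \<Rightarrow> nat \<Rightarrow> 'v" where
  "mean_curv h e n = (1 / real n) *\<^sub>R (\<Sum>i<n. h (e i) (e i))"

end

theory Submission
  imports Defs
begin

lemma half_mono:
  fixes a b d :: real
  assumes "b \<le> d"
  shows "(a + b) / 2 \<le> (d + a) / 2"
  using assms by simp

lemma pair_sum:
  fixes f :: "nat \<Rightarrow> nat \<Rightarrow> real"
  assumes sym: "\<And>i j. f i j = f j i"
  shows "2 * (\<Sum>(i,j)\<in>{(i,j). i<j \<and> j<n}. f i j) = (\<Sum>i<n. \<Sum>j<n. f i j) - (\<Sum>i<n. f i i)"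
proof (induction n)
  case 0
  then show ?case by simp
next
  case (Suc n)
  have eq: "{(i,j). i<j \<and> j<Suc n} = {(i,j). i<j \<and> j<n} \<union> (\<lambda>i. (i,n)) ` {..<n}" by auto
  have fin: "finite {(i,j). i<j \<and> j<(n::nat)}"
    by (rule finite_subset[of _ "{..<n} \<times> {..<n}"]) auto
  have "(\<Sum>(i,j)\<in>{(i,j). i<j \<and> j<Suc n}. f i j) = (\<Sum>(i,j)\<in>{(i,j). i<j \<and> j<n}. f i j) + (\<Sum>(i,j)\<in>(\<lambda>i. (i,n)) ` {..<n}. f i j)"
    unfolding eq by (rule sum.union_disjoint) (use fin in auto)
  also have "(\<Sum>(i,j)\<in>(\<lambda>i. (i,n)) ` {..<n}. f i j) = (\<Sum>i<n. f i n)"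
    by (subst sum.reindex) (auto simp: inj_on_def)
  finally have 1: "(\<Sum>(i,j)\<in>{(i,j). i<j \<and> j<Suc n}. f i j) = (\<Sum>(i,j)\<in>{(i,j). i<j \<and> j<n}. f i j) + (\<Sum>i<n. f i n)" .
  have 2: "(\<Sum>i<Suc n. \<Sum>j<Suc n. f i j) = (\<Sum>i<n. \<Sum>j<n. f i j) + (\<Sum>i<n. f i n) + (\<Sum>j<n. f n j) + f n n"
    by (simp add: sum.distrib)
  have 3: "(\<Sum>j<n. f n j) = (\<Sum>i<n. f i n)" using sym by simp
  show ?case using 1 2 3 Suc.IH by simp
qed

lemma cs_vec:
  fixes v :: "nat \<Rightarrow> 'v::real_inner"
  shows "inner (\<Sum>i<n. v i) (\<Sum>i<n. v i) \<le> real n * (\<Sum>i<n. inner (v i) (v i))"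
proof -
  have "0 \<le> (\<Sum>i<n. \<Sum>j<n. inner (v i - v j) (v i - v j))"
    by (intro sum_nonneg) simp
  also have "\<dots> = (\<Sum>i<n. \<Sum>j<n. inner (v i) (v i) + inner (v j) (v j) - 2 * inner (v i) (v j))"
    by (intro sum.cong refl) (simp add: inner_diff_left inner_diff_right inner_commute)
  also have "\<dots> = 2 * (real n * (\<Sum>i<n. inner (v i) (v i)) - inner (\<Sum>i<n. v i) (\<Sum>i<n. v i))"
  proof -
    have a: "(\<Sum>i<n. \<Sum>j<n. inner (v j) (v i)) = (\<Sum>i<n. \<Sum>j<n. inner (v i) (v j))"
      by (subst sum.swap) simp
    show ?thesis
      by (simp add: sum.distrib sum_subtractf inner_sum_left inner_sum_right sum_distrib_left algebra_simps a)
  qed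
  finally show ?thesis by simp
qed


theorem theorem1:
  fixes m n :: nat and c :: real
    and e :: "nat \<Rightarrow> 'v::euclidean_space"
    and psi :: "nat \<Rightarrow> 'v \<Rightarrow> 'v"
    and Q :: "'v \<Rightarrow> 'v"
    and h :: "'v \<Rightarrow> 'v \<Rightarrow> 'v"
    and R :: "'v \<Rightarrow> 'v \<Rightarrow> 'v \<Rightarrow> 'v"
  assumes dim: "DIM('v) = 4 * m"
    and n_ge: "2 \<le> n" and n_le: "n \<le> 4 * m"
    and onb: "\<And>i j. i < 4 * m \<Longrightarrow> j < 4 * m \<Longrightarrow> inner (e i) (e j) = (if i = j then 1 else 0)"
    and psi_lin: "\<And>k. k \<in> {1..3} \<Longrightarrow> linear (psi k)"
    and psi_sq: "\<And>k X. k \<in> {1..3} \<Longrightarrow> psi k (psi k X) = - X"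
    and psi_herm: "\<And>k X Y. k \<in> {1..3} \<Longrightarrow> inner (psi k X) (psi k Y) = inner X Y"
    and psi_12: "\<And>X. psi 1 (psi 2 X) = psi 3 X" "\<And>X. psi 2 (psi 1 X) = - psi 3 X"
    and psi_23: "\<And>X. psi 2 (psi 3 X) = psi 1 X" "\<And>X. psi 3 (psi 2 X) = - psi 1 X"
    and psi_31: "\<And>X. psi 3 (psi 1 X) = psi 2 X" "\<And>X. psi 1 (psi 3 X) = - psi 2 X"
    and Q_lin: "linear Q"
    and h_bilin: "\<And>X. X \<in> tan_space e n \<Longrightarrow> linear (h X)"
    and h_sym: "\<And>X Y. X \<in> tan_space e n \<Longrightarrow> Y \<in> tan_space e n \<Longrightarrow> h X Y = h Y X"
    and h_normal: "\<And>X Y i. X \<in> tan_space e n \<Longrightarrow> Y \<in> tan_space e n \<Longrightarrow> i < n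
                     \<Longrightarrow> inner (h X Y) (e i) = 0"
    and R_tan: "\<And>X Y Z. X \<in> tan_space e n \<Longrightarrow> Y \<in> tan_space e n \<Longrightarrow> Z \<in> tan_space e n
                  \<Longrightarrow> R X Y Z \<in> tan_space e n"
    and gauss: "\<And>X Y Z W. X \<in> tan_space e n \<Longrightarrow> Y \<in> tan_space e n \<Longrightarrow> Z \<in> tan_space e n
                  \<Longrightarrow> W \<in> tan_space e n \<Longrightarrow>
                  inner (R_dd c psi e n Q X Y Z) W
                  = inner (R X Y Z) W + inner (h X Z) (h Y W) - inner (h X W) (h Y Z)"
  shows "scal_curv R e n \<le> (real n - 1) / 2 *
           (real n * (norm (mean_curv h e n))\<^sup>2
            + c * ((real n - 1) + 3 * (\<Sum>k\<in>{1..3}. P_normsq psi e n k / real n))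
                * ((real n - 2 * trM Q e n * (real n - 1)) / (real n - 1)))"
proof -
  define t where "t = tau' c psi e n / real n"
  define M where "M i = inner (Q (e i)) (e i)" for i
  define x where "x k i j = inner (psi k (e i)) (e j)" for k i j
  define hh where "hh i j = inner (h (e i) (e i)) (h (e j) (e j))" for i j
  have etan: "\<And>i. i < n \<Longrightarrow> e i \<in> tan_space e n"
    unfolding tan_space_def by (rule span_base) auto
  have einner: "\<And>i j. i < n \<Longrightarrow> j < n \<Longrightarrow> inner (e i) (e j) = (if i = j then 1 else 0)"
    using onb n_le by auto
  have psi_anti: "\<And>k X Y. k \<in> {1..3} \<Longrightarrow> inner (psi k X) Y = - inner (psi k Y) X"
  proof -
    fix k X Y assume k: "(k::nat) \<in> {1..3}"
    have "inner (psi k (psi k Y)) (psi k X) = inner (psi k Y) X" using psi_herm[OF k] .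
    then show "inner (psi k X) Y = - inner (psi k Y) X" using psi_sq[OF k] by (simp add: inner_commute)
  qed
  have psi_self: "\<And>k X. k \<in> {1..3} \<Longrightarrow> inner (psi k X) X = 0"
  proof -
    fix k X assume k: "(k::nat) \<in> {1..3}"
    have "inner (psi k X) X = - inner (psi k X) X" using psi_anti[OF k, of X X] .
    then show "inner (psi k X) X = 0" by linarith
  qed
  have xanti: "\<And>k i j. k \<in> {1..3} \<Longrightarrow> x k j i = - x k i j"
    unfolding x_def using psi_anti by blast
  have xdiag: "\<And>k i. k \<in> {1..3} \<Longrightarrow> x k i i = 0"
    unfolding x_def using psi_self by blast
  have Rdd: "inner (R_dd c psi e n Q (e i) (e j) (e j)) (e i)
      = c * (1 + 3 * (\<Sum>k\<in>{1..3}. (x k i j)\<^sup>2)) - t * (M i + M j)"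
    if ij: "i < n" "j < n" "i \<noteq> j" for i j
  proof -
    have s: "(\<Sum>k\<in>{1..3}. inner (psi k (e j)) (e j) * inner (psi k (e i)) (e i)
         - inner (psi k (e i)) (e j) * inner (psi k (e j)) (e i)
         - 2 * inner (psi k (e i)) (e j) * inner (psi k (e j)) (e i))
        = 3 * (\<Sum>k\<in>{1..3}. (x k i j)\<^sup>2)"
      unfolding sum_distrib_left
      by (intro sum.cong refl) (simp add: psi_self xanti[of _ i j, unfolded x_def] x_def power2_eq_square)
    show ?thesis
      unfolding R_dd_def R_star_def t_def M_def
      using ij s
      by (simp add: inner_diff_left inner_add_left inner_sum_left einner)
  qed
  define F where "F i j = c * (1 + 3 * (\<Sum>k\<in>{1..3}. (x k i j)\<^sup>2)) - t * (M i + M j) + hh i j" for i j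
  have Fsym: "F i j = F j i" for i j
  proof -
    have "(\<Sum>k\<in>{1..3}. (x k i j)\<^sup>2) = (\<Sum>k\<in>{1..3}. (x k j i)\<^sup>2)"
      by (intro sum.cong refl) (simp add: xanti[of _ i j])
    moreover have "hh i j = hh j i" unfolding hh_def by (simp add: inner_commute)
    ultimately show ?thesis unfolding F_def by simp
  qed
  have Kle: "sec_curv R (e i) (e j) \<le> F i j" if ij: "i < j" "j < n" for i j
  proof -
    have g: "inner (R_dd c psi e n Q (e i) (e j) (e j)) (e i)
      = inner (R (e i) (e j) (e j)) (e i) + inner (h (e i) (e j)) (h (e j) (e i)) - hh i j"
      unfolding hh_def using gauss etan ij by simp
    have "h (e j) (e i) = h (e i) (e j)" using h_sym etan ij by simp
    then have "inner (h (e i) (e j)) (h (e j) (e i)) \<ge> 0" by simp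
    then show ?thesis unfolding sec_curv_def F_def using g Rdd[of i j] ij by simp
  qed
  have "scal_curv R e n \<le> (\<Sum>(i,j)\<in>{(i,j). i<j \<and> j<n}. F i j)"
    unfolding scal_curv_def by (intro sum_mono) (use Kle in auto)
  also have "\<dots> = ((\<Sum>i<n. \<Sum>j<n. F i j) - (\<Sum>i<n. F i i)) / 2"
    using pair_sum[of F n] Fsym by simp
  finally have tau_le: "scal_curv R e n \<le> ((\<Sum>i<n. \<Sum>j<n. F i j) - (\<Sum>i<n. F i i)) / 2" .
  define S where "S = (\<Sum>i<n. h (e i) (e i))"
  define P where "P = (\<Sum>k\<in>{1..3}. P_normsq psi e n k)"
  define D where "D = (\<Sum>i<n. hh i i)"
  have tanpart: "inner (tan_part e n v) (e j) = inner v (e j)" if "j < n" for v j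
  proof -
    have "inner (tan_part e n v) (e j) = (\<Sum>l<n. if l = j then inner v (e l) else 0)"
      unfolding tan_part_def inner_sum_left using einner that by (intro sum.cong refl) simp
    also have "\<dots> = inner v (e j)" using that by simp
    finally show ?thesis .
  qed
  have Pn: "P_normsq psi e n k = (\<Sum>i<n. \<Sum>j<n. (x k i j)\<^sup>2)" for k
    unfolding P_normsq_def P_op_def x_def using tanpart by simp
  have SS: "inner S S = (\<Sum>i<n. \<Sum>j<n. hh i j)"
    unfolding S_def hh_def by (simp add: inner_sum_left inner_sum_right inner_commute)
  have trM: "trM Q e n = (\<Sum>i<n. M i)" unfolding trM_def M_def ..
  have sumF: "(\<Sum>i<n. \<Sum>j<n. F i j) = c * (real n * real n + 3 * P) - t * (2 * real n * trM Q e n) + inner S S"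
  proof -
    have a: "(\<Sum>i<n. \<Sum>j<n. (\<Sum>k\<in>{1..3}. (x k i j)\<^sup>2)) = P"
    proof -
      have "(\<Sum>i<n. \<Sum>j<n. (\<Sum>k\<in>{1..3}. (x k i j)\<^sup>2)) = (\<Sum>i<n. \<Sum>k\<in>{1..3}. \<Sum>j<n. (x k i j)\<^sup>2)"
        by (rule sum.cong[OF refl], rule sum.swap)
      also have "\<dots> = (\<Sum>k\<in>{1..3}. \<Sum>i<n. \<Sum>j<n. (x k i j)\<^sup>2)"
        by (rule sum.swap)
      finally show ?thesis unfolding P_def Pn .
    qed
    have b: "(\<Sum>i<n. \<Sum>j<n. F i j) = (\<Sum>i<n. \<Sum>j<n. c + 3 * c * (\<Sum>k\<in>{1..3}. (x k i j)\<^sup>2) - t * M i - t * M j + hh i j)"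
      unfolding F_def by (simp add: algebra_simps)
    have c1: "(\<Sum>i<n. \<Sum>j<n. 3 * c * (\<Sum>k\<in>{1..3}. (x k i j)\<^sup>2)) = 3 * c * P"
      using a by (simp add: sum_distrib_left[symmetric])
    have c2: "(\<Sum>i<n. \<Sum>j<n. t * M i) = t * real n * trM Q e n"
      by (simp add: trM sum_distrib_left mult_ac)
    have c3: "(\<Sum>i<n. \<Sum>j<n. t * M j) = t * real n * trM Q e n"
      by (simp add: trM sum_distrib_left mult_ac)
    have d: "(\<Sum>i<n. \<Sum>j<n. c + 3 * c * (\<Sum>k\<in>{1..3}. (x k i j)\<^sup>2) - t * M i - t * M j + hh i j)
       = (\<Sum>i<n. \<Sum>j<n. c) + (\<Sum>i<n. \<Sum>j<n. 3 * c * (\<Sum>k\<in>{1..3}. (x k i j)\<^sup>2)) - (\<Sum>i<n. \<Sum>j<n. t * M i)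
         - (\<Sum>i<n. \<Sum>j<n. t * M j) + (\<Sum>i<n. \<Sum>j<n. hh i j)"
      by (simp only: sum.distrib sum_subtractf)
    show ?thesis
      unfolding b SS d c1 c2 c3
      by (simp add: algebra_simps)
  qed
  have diagF: "(\<Sum>i<n. F i i) = c * real n - t * (2 * trM Q e n) + D"
  proof -
    have "(\<Sum>i<n. F i i) = (\<Sum>i<n. c - t * (2 * M i) + hh i i)"
      unfolding F_def using xdiag by (intro sum.cong refl) simp
    also have "\<dots> = c * real n - t * (2 * trM Q e n) + D"
      unfolding D_def trM by (simp add: sum.distrib sum_subtractf sum_distrib_left)
    finally show ?thesis .
  qed
  have cs: "inner S S \<le> real n * D"
    unfolding S_def D_def hh_def by (rule cs_vec)
  have nge: "real n \<ge> 2" using n_ge by simp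
  have tdef: "t = c * ((real n - 1) + 3 * (\<Sum>k\<in>{1..3}. P_normsq psi e n k / real n))"
    unfolding t_def tau'_def using nge by (simp add: sum_divide_distrib[symmetric] field_simps)
  have nt: "c * (real n * real n + 3 * P) - c * real n = real n * t"
    unfolding t_def tau'_def P_def using nge by (simp add: field_simps)
  have mc: "(norm (mean_curv h e n))\<^sup>2 = inner S S / (real n * real n)"
    unfolding mean_curv_def S_def power2_norm_eq_inner by (simp add: power2_eq_square)
  have key: "inner S S - D \<le> (real n - 1) * real n * (inner S S / (real n * real n))"
  proof -
    have "(real n - 1) * real n * (inner S S / (real n * real n)) = inner S S - inner S S / real n"
      using nge by (simp add: field_simps)
    moreover have "inner S S / real n \<le> D" using cs nge by (simp add: divide_le_eq mult.commute)
    ultimately show ?thesis by simp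
  qed
  have rhs: "(real n - 1) / 2 * (real n * (norm (mean_curv h e n))\<^sup>2
            + c * ((real n - 1) + 3 * (\<Sum>k\<in>{1..3}. P_normsq psi e n k / real n))
                * ((real n - 2 * trM Q e n * (real n - 1)) / (real n - 1)))
      = ((real n - 1) * real n * (inner S S / (real n * real n)) + t * (real n - 2 * trM Q e n * (real n - 1))) / 2"
    unfolding tdef[symmetric] mc using nge by (simp add: field_simps)
  have "scal_curv R e n \<le> (real n * t - t * (2 * real n * trM Q e n) + t * (2 * trM Q e n) + (inner S S - D)) / 2"
    using tau_le unfolding sumF diagF using nt by (simp add: algebra_simps)
  also have "\<dots> \<le> ((real n - 1) * real n * (inner S S / (real n * real n)) + t * (real n - 2 * trM Q e n * (real n - 1))) / 2"
  proof -
    have "t * (real n - 2 * trM Q e n * (real n - 1)) = real n * t - t * (2 * real n * trM Q e n) + t * (2 * trM Q e n)"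
      by (simp add: algebra_simps)
    then show ?thesis using half_mono[OF key] by simp
  qed
  finally show ?thesis unfolding rhs .
qed

end
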